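(* Let $\omega=(\omega_0,\omega_1,\dots)\in\{0,1\}^{\mathbb{N}}$ have the following property: for every $l>0$ there exists $L>0$ such that for every $k\ge0$ the block $(\omega_k,\dots,\omega_{k+L-1})$ contains $l$ successive zeros. Then $\omega$ is not central, i.e. the set $\{i:\omega_i=1\}$ is not a central set.
   Context: $S\subset\mathbb{N}$ is central if there are a compact metric space $(Z,d)$ with continuous $R:Z\to Z$, a uniformly recurrent point $z_0$ (for every open $U\ni z_0$, $\{n:R^nz_0\in U\}$ has bounded gaps), a point $z$ proximal to $z_0$ ($d(R^{n_k}z,R^{n_k}z_0)\to0$ along some increasing sequence $n_k$), and a neighborhood $U$ of $z_0$ with $S=\{n:R^nz\in U\}$. *)

theory Defs
  imports "HOL-Analysis.Analysis"
begin

definition bounded_gaps :: "nat set \<Rightarrow> bool" where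
  "bounded_gaps A \<longleftrightarrow> (\<exists>g>0. \<forall>m. \<exists>n\<in>A. m \<le> n \<and> n < m + g)"

definition uniformly_recurrent :: "('a::metric_space \<Rightarrow> 'a) \<Rightarrow> 'a \<Rightarrow> bool" where
  "uniformly_recurrent R z0 \<longleftrightarrow>
     (\<forall>U. open U \<and> z0 \<in> U \<longrightarrow> bounded_gaps {n. (R ^^ n) z0 \<in> U})"

definition proximal :: "('a::metric_space \<Rightarrow> 'a) \<Rightarrow> 'a \<Rightarrow> 'a \<Rightarrow> bool" where
  "proximal R z z0 \<longleftrightarrow>
     (\<exists>nk::nat \<Rightarrow> nat. strict_mono nk \<and>
        (\<lambda>k. dist ((R ^^ nk k) z) ((R ^^ nk k) z0)) \<longlonglongrightarrow> 0)"

text \<open>Central set, realised with a compact metric space Z carried by a subset of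
  a metric-space type 'a (the type is a parameter; the main theorem is stated
  for an arbitrary such type).\<close>
definition central :: "'a::metric_space itself \<Rightarrow> nat set \<Rightarrow> bool" where
  "central _ S \<longleftrightarrow>
     (\<exists>(Z::'a set) R z0 z U.
        compact Z \<and> continuous_on Z R \<and> R ` Z \<subseteq> Z \<and>
        z0 \<in> Z \<and> z \<in> Z \<and>
        uniformly_recurrent R z0 \<and> proximal R z z0 \<and>
        U \<subseteq> Z \<and> (\<exists>V. open V \<and> z0 \<in> V \<and> V \<inter> Z \<subseteq> U) \<and>
        S = {n. (R ^^ n) z \<in> U})"

end

theory Submission
  imports Defs
begin

lemma iter_props:
  assumes "continuous_on Z R" "R ` Z \<subseteq> Z"
  shows "continuous_on Z (R ^^ i) \<and> (R ^^ i) ` Z \<subseteq> Z"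
proof (induction i)
  case 0 then show ?case by (simp add: continuous_on_id)
next
  case (Suc i)
  then have c: "continuous_on Z (R ^^ i)" and s: "(R ^^ i) ` Z \<subseteq> Z" by auto
  have "continuous_on Z (R \<circ> (R ^^ i))"
    by (rule continuous_on_compose[OF c]) (meson assms(1) continuous_on_subset s)
  moreover have "(R \<circ> (R ^^ i)) ` Z \<subseteq> Z" using s assms(2) by auto
  ultimately show ?case by (simp add: funpow_Suc_right[symmetric] funpow.simps(2))
qed

lemma unif_iter:
  assumes "compact Z" "continuous_on Z R" "R ` Z \<subseteq> Z" "e > 0"
  shows "\<exists>d>0. \<forall>x\<in>Z. \<forall>y\<in>Z. dist x y < d \<longrightarrow> (\<forall>i<L. dist ((R^^i) x) ((R^^i) y) < e)"
proof (induction L)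
  case 0 then show ?case by (rule exI[of _ 1]) auto
next
  case (Suc L)
  then obtain d where d: "d > 0" "\<forall>x\<in>Z. \<forall>y\<in>Z. dist x y < d \<longrightarrow> (\<forall>i<L. dist ((R^^i) x) ((R^^i) y) < e)" by blast
  have "uniformly_continuous_on Z (R ^^ L)"
    using compact_uniformly_continuous iter_props[OF assms(2,3)] assms(1) by blast
  then obtain d2 where d2: "d2 > 0" "\<forall>x\<in>Z. \<forall>y\<in>Z. dist y x < d2 \<longrightarrow> dist ((R^^L) y) ((R^^L) x) < e"
    unfolding uniformly_continuous_on_def using assms(4) by blast
  show ?case
  proof (rule exI[of _ "min d d2"], intro conjI ballI impI allI)
    show "min d d2 > 0" using d d2 by simp
    fix x y i assume xy: "x \<in> Z" "y \<in> Z" "dist x y < min d d2" and i: "i < Suc L"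
    show "dist ((R^^i) x) ((R^^i) y) < e"
    proof (cases "i < L")
      case True then show ?thesis using d xy by auto
    next
      case False then have "i = L" using i by simp
      then show ?thesis using d2 xy by auto
    qed
  qed
qed

theorem mainTheorem18:
  fixes \<omega> :: "nat \<Rightarrow> nat"
  assumes binary: "\<forall>i. \<omega> i \<in> {0, 1}"
    and zeros: "\<forall>l>0. \<exists>L>0. \<forall>k. \<exists>j. k \<le> j \<and> j + l \<le> k + L \<and> (\<forall>i\<in>{j..<j+l}. \<omega> i = 0)"
  shows "\<not> central TYPE('a::metric_space) {i. \<omega> i = 1}"
proof
  assume "central TYPE('a) {i. \<omega> i = 1}"
  then obtain Z :: "'a set" and R z0 z U V where
    Z: "compact Z" "continuous_on Z R" "R ` Z \<subseteq> Z" "z0 \<in> Z" "z \<in> Z"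
    and ur: "uniformly_recurrent R z0" and pr: "proximal R z z0"
    and U: "U \<subseteq> Z" and V: "open V" "z0 \<in> V" "V \<inter> Z \<subseteq> U"
    and S: "{i. \<omega> i = 1} = {n. (R ^^ n) z \<in> U}"
    unfolding central_def by blast
  obtain e where e: "e > 0" "ball z0 e \<subseteq> V" using V openE by blast
  have "bounded_gaps {n. (R ^^ n) z0 \<in> ball z0 (e/2)}"
    using ur e(1) unfolding uniformly_recurrent_def by (meson centre_in_ball half_gt_zero open_ball)
  then obtain g where g: "g > 0" "\<forall>m. \<exists>n\<in>{n. (R ^^ n) z0 \<in> ball z0 (e/2)}. m \<le> n \<and> n < m + g"
    unfolding bounded_gaps_def by blast
  obtain L where L: "L > 0" "\<forall>k. \<exists>j. k \<le> j \<and> j + g \<le> k + L \<and> (\<forall>i\<in>{j..<j+g}. \<omega> i = 0)"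
    using zeros g(1) by blast
  obtain d where d: "d > 0" "\<forall>x\<in>Z. \<forall>y\<in>Z. dist x y < d \<longrightarrow> (\<forall>i<L. dist ((R^^i) x) ((R^^i) y) < e/2)"
    using unif_iter[OF Z(1,2,3), of "e/2" L] e(1) by auto
  obtain nk where nk: "(\<lambda>k. dist ((R ^^ nk k) z) ((R ^^ nk k) z0)) \<longlonglongrightarrow> 0"
    using pr unfolding proximal_def by blast
  then have "eventually (\<lambda>k. dist ((R ^^ nk k) z) ((R ^^ nk k) z0) < d) sequentially"
    using d(1) by (metis order_tendstoD(2))
  then obtain k where k: "dist ((R ^^ nk k) z) ((R ^^ nk k) z0) < d"
    by (meson eventually_sequentially order_refl)
  define m where "m = nk k"
  obtain j where j: "m \<le> j" "j + g \<le> m + L" "\<forall>i\<in>{j..<j+g}. \<omega> i = 0" using L(2) by blast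
  obtain n where n: "(R ^^ n) z0 \<in> ball z0 (e/2)" "j \<le> n" "n < j + g" using g(2) by blast
  define i where "i = n - m"
  have i: "i < L" "n = i + m" using j n unfolding i_def by auto
  have zm: "(R^^m) z \<in> Z" "(R^^m) z0 \<in> Z" using iter_props[OF Z(2,3), of m] Z(4,5) by auto
  have "dist ((R^^i) ((R^^m) z)) ((R^^i) ((R^^m) z0)) < e/2"
    using d(2) zm k i(1) unfolding m_def by blast
  then have "dist ((R^^n) z) ((R^^n) z0) < e/2" by (simp add: i(2) funpow_add)
  moreover have "dist z0 ((R^^n) z0) < e/2" using n(1) by simp
  ultimately have "dist z0 ((R^^n) z) < e" using dist_triangle[of z0 "(R^^n) z" "(R^^n) z0"] by (simp add: dist_commute)
  then have "(R^^n) z \<in> V" using e(2) by auto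
  moreover have "(R^^n) z \<in> Z" using iter_props[OF Z(2,3), of n] Z(5) by auto
  ultimately have "(R^^n) z \<in> U" using V(3) by auto
  then have "\<omega> n = 1" using S by blast
  moreover have "\<omega> n = 0" using j(3) n by auto
  ultimately show False by simp
qed

end
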